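(* Let $A=(a_{i,j})\in\Theta_\vartriangle(n)$ have all diagonal entries zero, write $A=A^++A^-$ with $A^+$ (resp. $A^-$) the matrix keeping the entries $a_{i,j}$ with $i<j$ (resp. $i>j$) and zero elsewhere, and let $\lambda\in\mathbb N^n_\vartriangle$. Define $\mu,\nu\in\mathbb N^n_\vartriangle$ by $\mu_i=\lambda_i+\sum_{k<i}a_{i,k}$ and $\nu_i=\lambda_i+\sum_{k<i}a_{k,i}$. Then $$d_{A+\mathrm{diag}(\lambda)}=d_{A^++\mathrm{diag}(\mu)}+d_{A^-+\mathrm{diag}(\nu)}.$$
   Context: $\Theta_\vartriangle(n)$ is the set of matrices $B=(b_{i,j})_{i,j\in\mathbb Z}$ with $b_{i,j}\in\mathbb N$, $b_{i+n,j+n}=b_{i,j}$ and finitely many nonzero entries in each row. $\mathbb N^n_\vartriangle$ is the set of $n$-periodic sequences $(\lambda_i)_{i\in\mathbb Z}$ of nonnegative integers, and $\mathrm{diag}(\lambda)$ is the diagonal matrix with $(i,i)$ entry $\lambda_i$. For $B\in\Theta_\vartriangle(n)$, $d_B=\sum b_{i,j}b_{k,l}$, summing over all $i,j,k,l\in\mathbb Z$ with $1\le i\le n$, $k\le i$ and $j<l$. *)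

theory Defs
  imports Main
begin

type_synonym mat = "int \<Rightarrow> int \<Rightarrow> nat"

definition Theta :: "nat \<Rightarrow> mat set" where
  "Theta n = {B. (\<forall>i j. B (i + int n) (j + int n) = B i j) \<and>
                 (\<forall>i. finite {j. B i j \<noteq> 0})}"

definition Nseq :: "nat \<Rightarrow> (int \<Rightarrow> nat) set" where
  "Nseq n = {lam. \<forall>i. lam (i + int n) = lam i}"

definition diagm :: "(int \<Rightarrow> nat) \<Rightarrow> mat" where
  "diagm lam = (\<lambda>i j. if i = j then lam i else 0)"

definition madd :: "mat \<Rightarrow> mat \<Rightarrow> mat" where
  "madd A B = (\<lambda>i j. A i j + B i j)"

definition upper_part :: "mat \<Rightarrow> mat" where
  "upper_part A = (\<lambda>i j. if i < j then A i j else 0)"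

definition lower_part :: "mat \<Rightarrow> mat" where
  "lower_part A = (\<lambda>i j. if i > j then A i j else 0)"

text \<open>d_B = sum of b_{i,j} b_{k,l} over 1 \<le> i \<le> n, k \<le> i, j < l.
  Only nonzero terms are summed; for B in Theta n this index set is finite.\<close>
definition dB :: "nat \<Rightarrow> mat \<Rightarrow> nat" where
  "dB n B = (\<Sum>(i, j, k, l) \<in> {(i, j, k, l). 1 \<le> i \<and> i \<le> int n \<and> k \<le> i \<and> j < l
                                   \<and> B i j * B k l \<noteq> 0}. B i j * B k l)"

definition mu_seq :: "mat \<Rightarrow> (int \<Rightarrow> nat) \<Rightarrow> int \<Rightarrow> nat" where
  "mu_seq A lam = (\<lambda>i. lam i + (\<Sum>k \<in> {k. k < i \<and> A i k \<noteq> 0}. A i k))"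

definition nu_seq :: "mat \<Rightarrow> (int \<Rightarrow> nat) \<Rightarrow> int \<Rightarrow> nat" where
  "nu_seq A lam = (\<lambda>i. lam i + (\<Sum>k \<in> {k. k < i \<and> A k i \<noteq> 0}. A k i))"

end

theory Submission imports Defs begin

definition band :: "int \<Rightarrow> mat \<Rightarrow> bool" where
  "band R B \<longleftrightarrow> (\<forall>i j. B i j \<noteq> 0 \<longrightarrow> \<bar>i - j\<bar> \<le> R)"

definition SS :: "nat \<Rightarrow> int \<Rightarrow> mat \<Rightarrow> mat \<Rightarrow> nat" where
  "SS n M X Y = (\<Sum>i\<in>{1..int n}. \<Sum>j\<in>{-M..M}. \<Sum>k\<in>{-M..M}. \<Sum>l\<in>{-M..M}.
      of_bool (k \<le> i \<and> j < l) * X i j * Y k l)"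

lemma dB_SS:
  assumes b: "band R B" and R: "0 \<le> R" and M: "M = int n + 2*R + 2"
  shows "dB n B = SS n M B B"
proof -
  let ?W = "{-M..M}"
  let ?T = "{(i, j, k, l). 1 \<le> i \<and> i \<le> int n \<and> k \<le> i \<and> j < l \<and> B i j * B k l \<noteq> 0}"
  let ?P = "{1..int n} \<times> ?W \<times> ?W \<times> ?W"
  let ?g = "\<lambda>(i,j,k,l). of_bool (k \<le> i \<and> j < l) * B i j * B k l"
  have sub: "?T \<subseteq> ?P"
  proof
    fix x assume "x \<in> ?T"
    then obtain i j k l where x: "x = (i,j,k,l)" and h: "1 \<le> i" "i \<le> int n" "k \<le> i" "j < l"
      "B i j \<noteq> 0" "B k l \<noteq> 0" by auto
    have "\<bar>i - j\<bar> \<le> R" "\<bar>k - l\<bar> \<le> R" using b h unfolding band_def by auto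
    then show "x \<in> ?P" using h x M R by auto
  qed
  have "dB n B = sum ?g ?P"
    unfolding dB_def
    by (rule sum.mono_neutral_cong_left) (use sub in auto)
  also have "\<dots> = SS n M B B"
    unfolding SS_def by (simp add: sum.cartesian_product)
  finally show ?thesis .
qed

lemma SS_add1: "SS n M (madd X Y) Z = SS n M X Z + SS n M Y Z"
  unfolding SS_def madd_def by (simp add: sum.distrib distrib_left distrib_right)
lemma SS_add2: "SS n M Z (madd X Y) = SS n M Z X + SS n M Z Y"
  unfolding SS_def madd_def by (simp add: sum.distrib distrib_left distrib_right)

lemma SS_zeroI:
  assumes "\<And>i j k l. k \<le> i \<Longrightarrow> j < l \<Longrightarrow> X i j * Y k l = 0"
  shows "SS n M X Y = 0"
  unfolding SS_def using assms by (intro sum.neutral ballI) (simp add: mult.assoc)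

lemma SS_DD: "SS n M (diagm a) (diagm b) = 0"
  by (rule SS_zeroI) (auto simp: diagm_def)
lemma SS_UD: "SS n M (upper_part X) (diagm b) = 0"
  by (rule SS_zeroI) (auto simp: diagm_def upper_part_def)
lemma SS_DL: "SS n M (diagm b) (lower_part X) = 0"
  by (rule SS_zeroI) (auto simp: diagm_def lower_part_def)
lemma SS_UL: "SS n M (upper_part X) (lower_part Y) = 0"
  by (rule SS_zeroI) (auto simp: upper_part_def lower_part_def)

lemma periodic_int:
  assumes per: "\<forall>i j. A (i + int n) (j + int n) = A i j"
  shows "A (i + q * int n) (j + q * int n) = A i j"
proof -
  have nat: "A (i + int p * int n) (j + int p * int n) = A i j" for p :: nat and i j
  proof (induction p arbitrary: i j)
    case 0 then show ?case by simp
  next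
    case (Suc p)
    have "A (i + int (Suc p) * int n) (j + int (Suc p) * int n)
        = A ((i + int p * int n) + int n) ((j + int p * int n) + int n)"
      by (simp add: algebra_simps)
    also have "\<dots> = A (i + int p * int n) (j + int p * int n)" using per by blast
    also have "\<dots> = A i j" by (rule Suc.IH)
    finally show ?case .
  qed
  show ?thesis
  proof (cases "q \<ge> 0")
    case True
    then obtain p where "q = int p" using nonneg_eq_int by blast
    then show ?thesis using nat[of i p j] by simp
  next
    case False
    then have "- q \<ge> 0" by simp
    then obtain p where p: "- q = int p" using nonneg_eq_int by blast
    have "A (i + q * int n) (j + q * int n) = A ((i + q * int n) + int p * int n) ((j + q * int n) + int p * int n)"
      by (rule nat[symmetric])
    also have "(i + q * int n) + int p * int n = i" using p by (simp add: algebra_simps flip: p)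
    also have "(j + q * int n) + int p * int n = j" using p by (simp add: algebra_simps flip: p)
    finally show ?thesis .
  qed
qed

lemma Theta_band:
  assumes "A \<in> Theta n" "0 < n"
  shows "\<exists>R\<ge>0. band R A"
proof -
  let ?S = "\<Union>r\<in>{0..<int n}. (\<lambda>j. \<bar>r - j\<bar>) ` {j. A r j \<noteq> 0}"
  have fin: "finite ?S" using assms(1) unfolding Theta_def by auto
  define R where "R = max 0 (Max ?S)"
  have per: "\<forall>i j. A (i + int n) (j + int n) = A i j" using assms(1) unfolding Theta_def by auto
  have "band R A" unfolding band_def
  proof (intro allI impI)
    fix i j assume nz: "A i j \<noteq> 0"
    define r where "r = i mod int n"
    define q where "q = i div int n"
    have i: "i = r + q * int n" unfolding r_def q_def by simp
    have "A r (j - q * int n) = A (r + q * int n) ((j - q * int n) + q * int n)"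
      using periodic_int[OF per, of r q "j - q * int n"] by simp
    also have "\<dots> = A i j" using i by simp
    finally have nz': "A r (j - q * int n) \<noteq> 0" using nz by simp
    have r: "r \<in> {0..<int n}" unfolding r_def using assms(2) by simp
    have "\<bar>r - (j - q * int n)\<bar> \<in> ?S" using r nz' by blast
    then have "\<bar>r - (j - q * int n)\<bar> \<le> Max ?S" using fin by simp
    moreover have "\<bar>r - (j - q * int n)\<bar> = \<bar>i - j\<bar>" using i by (simp add: algebra_simps)
    ultimately show "\<bar>i - j\<bar> \<le> R" unfolding R_def by simp
  qed
  moreover have "R \<ge> 0" unfolding R_def by simp
  ultimately show ?thesis by blast
qed

lemma key:
  assumes b: "band R A" and R: "0 \<le> R" and M: "M = int n + 2*R + 2"
  defines "m \<equiv> (\<lambda>i. \<Sum>k \<in> {k. k < i \<and> A i k \<noteq> 0}. A i k)"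
      and "nn \<equiv> (\<lambda>i. \<Sum>k \<in> {k. k < i \<and> A k i \<noteq> 0}. A k i)"
  shows "SS n M (lower_part A) (upper_part A) =
         SS n M (diagm m) (upper_part A) + SS n M (lower_part A) (diagm nn)"
proof -
  let ?W = "{-M..M}"
  let ?U = "upper_part A" and ?L = "lower_part A"
  have bd: "A i j \<noteq> 0 \<Longrightarrow> \<bar>i - j\<bar> \<le> R" for i j using b unfolding band_def by auto
  have bd': "0 < A i j \<Longrightarrow> i - j \<le> R \<and> j - i \<le> R" for i j using bd[of i j] by auto
  have ma: "m i = (\<Sum>j\<in>?W. of_bool (j < i) * A i j)" if "1 \<le> i" "i \<le> int n" for i
    unfolding m_def
    by (rule sum.mono_neutral_cong_left) (use that M R in \<open>auto dest!: bd'\<close>)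
  have na: "nn l = (\<Sum>k\<in>?W. of_bool (k < l) * A k l)" if "1 - R \<le> l" "l \<le> M" for l
    unfolding nn_def
    by (rule sum.mono_neutral_cong_left) (use that M R in \<open>auto dest!: bd'\<close>)
  have c: "(\<Sum>j\<in>?W. \<Sum>k\<in>?W. \<Sum>l\<in>?W. of_bool (k \<le> i \<and> j < l) * diagm m i j * ?U k l)
     = (\<Sum>j\<in>?W. \<Sum>k\<in>?W. \<Sum>l\<in>?W. of_bool (k \<le> i \<and> i < l) * (of_bool (j < i) * A i j) * ?U k l)"
    if i: "1 \<le> i" "i \<le> int n" for i
  proof -
    have iW: "i \<in> ?W" using i M R by auto
    have "(\<Sum>j\<in>?W. \<Sum>k\<in>?W. \<Sum>l\<in>?W. of_bool (k \<le> i \<and> j < l) * diagm m i j * ?U k l)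
        = (\<Sum>j\<in>?W. if i = j then (\<Sum>k\<in>?W. \<Sum>l\<in>?W. of_bool (k \<le> i \<and> i < l) * m i * ?U k l) else 0)"
      by (rule sum.cong) (auto simp: diagm_def)
    also have "\<dots> = (\<Sum>k\<in>?W. \<Sum>l\<in>?W. of_bool (k \<le> i \<and> i < l) * m i * ?U k l)"
      using iW by simp
    also have "\<dots> = (\<Sum>k\<in>?W. \<Sum>l\<in>?W. \<Sum>j\<in>?W. of_bool (k \<le> i \<and> i < l) * (of_bool (j < i) * A i j) * ?U k l)"
      unfolding ma[OF i] by (simp only: sum_distrib_left sum_distrib_right)
    also have "\<dots> = (\<Sum>k\<in>?W. \<Sum>j\<in>?W. \<Sum>l\<in>?W. of_bool (k \<le> i \<and> i < l) * (of_bool (j < i) * A i j) * ?U k l)"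
      by (rule sum.cong[OF refl], rule sum.swap)
    also have "\<dots> = (\<Sum>j\<in>?W. \<Sum>k\<in>?W. \<Sum>l\<in>?W. of_bool (k \<le> i \<and> i < l) * (of_bool (j < i) * A i j) * ?U k l)"
      by (rule sum.swap)
    finally show ?thesis .
  qed
  have d: "(\<Sum>j\<in>?W. \<Sum>k\<in>?W. \<Sum>l\<in>?W. of_bool (k \<le> i \<and> j < l) * ?L i j * diagm nn k l)
     = (\<Sum>j\<in>?W. \<Sum>k\<in>?W. \<Sum>l\<in>?W. of_bool (j < l \<and> l \<le> i) * ?L i j * (of_bool (k < l) * A k l))"
    if i: "1 \<le> i" "i \<le> int n" for i
  proof -
    have "(\<Sum>j\<in>?W. \<Sum>k\<in>?W. \<Sum>l\<in>?W. of_bool (k \<le> i \<and> j < l) * ?L i j * diagm nn k l)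
       = (\<Sum>j\<in>?W. \<Sum>l\<in>?W. of_bool (l \<le> i \<and> j < l) * ?L i j * nn l)"
    proof (rule sum.cong[OF refl])
      fix j
      have "(\<Sum>k\<in>?W. \<Sum>l\<in>?W. of_bool (k \<le> i \<and> j < l) * ?L i j * diagm nn k l)
          = (\<Sum>k\<in>?W. \<Sum>l\<in>?W. if k = l then of_bool (k \<le> i \<and> j < k) * ?L i j * nn k else 0)"
        by (intro sum.cong refl) (auto simp: diagm_def)
      also have "\<dots> = (\<Sum>l\<in>?W. of_bool (l \<le> i \<and> j < l) * ?L i j * nn l)"
        by simp
      finally show "(\<Sum>k\<in>?W. \<Sum>l\<in>?W. of_bool (k \<le> i \<and> j < l) * ?L i j * diagm nn k l)
          = (\<Sum>l\<in>?W. of_bool (l \<le> i \<and> j < l) * ?L i j * nn l)" .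
    qed
    also have "\<dots> = (\<Sum>j\<in>?W. \<Sum>l\<in>?W. \<Sum>k\<in>?W. of_bool (j < l \<and> l \<le> i) * ?L i j * (of_bool (k < l) * A k l))"
    proof (intro sum.cong refl)
      fix j l assume jW: "j \<in> ?W" and lW: "l \<in> ?W"
      show "of_bool (l \<le> i \<and> j < l) * ?L i j * nn l
          = (\<Sum>k\<in>?W. of_bool (j < l \<and> l \<le> i) * ?L i j * (of_bool (k < l) * A k l))"
      proof (cases "?L i j \<noteq> 0 \<and> j < l \<and> l \<le> i")
        case True
        then have "A i j \<noteq> 0" "j < i" by (auto simp: lower_part_def split: if_splits)
        then have "1 - R \<le> l" "l \<le> M" using bd[of i j] True i M R by auto
        then have nl: "nn l = (\<Sum>k\<in>?W. of_bool (k < l) * A k l)" by (rule na)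
        have eq1: "(l \<le> i \<and> j < l) = True" "(j < l \<and> l \<le> i) = True" using True by auto
        show ?thesis unfolding nl eq1 by (simp only: sum_distrib_left)
      next
        case False
        then show ?thesis by auto
      qed
    qed
    also have "\<dots> = (\<Sum>j\<in>?W. \<Sum>k\<in>?W. \<Sum>l\<in>?W. of_bool (j < l \<and> l \<le> i) * ?L i j * (of_bool (k < l) * A k l))"
      by (rule sum.cong[OF refl]) (rule sum.swap)
    finally show ?thesis .
  qed
  have e: "of_bool (k \<le> i \<and> j < l) * ?L i j * ?U k l =
      of_bool (k \<le> i \<and> i < l) * (of_bool (j < i) * A i j) * ?U k l
    + of_bool (j < l \<and> l \<le> i) * ?L i j * (of_bool (k < l) * A k l)" for i j k l
    by (auto simp: lower_part_def upper_part_def)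
  have "SS n M ?L ?U = (\<Sum>i\<in>{1..int n}.
      (\<Sum>j\<in>?W. \<Sum>k\<in>?W. \<Sum>l\<in>?W. of_bool (k \<le> i \<and> i < l) * (of_bool (j < i) * A i j) * ?U k l)
    + (\<Sum>j\<in>?W. \<Sum>k\<in>?W. \<Sum>l\<in>?W. of_bool (j < l \<and> l \<le> i) * ?L i j * (of_bool (k < l) * A k l)))"
    unfolding SS_def by (simp only: e sum.distrib)
  also have "\<dots> = SS n M (diagm m) ?U + SS n M ?L (diagm nn)"
  proof -
    have c': "(\<Sum>i\<in>{1..int n}. \<Sum>j\<in>?W. \<Sum>k\<in>?W. \<Sum>l\<in>?W. of_bool (k \<le> i \<and> i < l) * (of_bool (j < i) * A i j) * ?U k l)
        = SS n M (diagm m) ?U"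
      unfolding SS_def by (rule sum.cong[OF refl], rule c[symmetric]) auto
    have d': "(\<Sum>i\<in>{1..int n}. \<Sum>j\<in>?W. \<Sum>k\<in>?W. \<Sum>l\<in>?W. of_bool (j < l \<and> l \<le> i) * ?L i j * (of_bool (k < l) * A k l))
        = SS n M ?L (diagm nn)"
      unfolding SS_def by (rule sum.cong[OF refl], rule d[symmetric]) auto
    show ?thesis unfolding sum.distrib c' d' ..
  qed
  finally show ?thesis .
qed

lemma band_madd: "band R X \<Longrightarrow> band R Y \<Longrightarrow> band R (madd X Y)"
  unfolding band_def madd_def by auto
lemma band_diagm: "0 \<le> R \<Longrightarrow> band R (diagm f)"
  unfolding band_def diagm_def by auto
lemma band_upper: "band R X \<Longrightarrow> band R (upper_part X)"
  unfolding band_def upper_part_def by (metis bot_nat_0.not_eq_extremum)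
lemma band_lower: "band R X \<Longrightarrow> band R (lower_part X)"
  unfolding band_def lower_part_def by (metis bot_nat_0.not_eq_extremum)

lemma diagm_add: "diagm (\<lambda>i. f i + g i) = madd (diagm f) (diagm g)"
  unfolding diagm_def madd_def by (auto simp: fun_eq_iff)

theorem lemma3p10p2:
  fixes n :: nat and A :: "int \<Rightarrow> int \<Rightarrow> nat" and lam :: "int \<Rightarrow> nat"
  assumes "0 < n"
    and "A \<in> Theta n"
    and "\<forall>i. A i i = 0"
    and "lam \<in> Nseq n"
  shows "dB n (madd A (diagm lam)) =
           dB n (madd (upper_part A) (diagm (mu_seq A lam)))
         + dB n (madd (lower_part A) (diagm (nu_seq A lam)))"
proof -
  obtain R where R: "0 \<le> R" and bA: "band R A" using Theta_band[OF assms(2,1)] by blast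
  define M where "M = int n + 2*R + 2"
  define m where "m \<equiv> (\<lambda>i. \<Sum>k \<in> {k. k < i \<and> A i k \<noteq> 0}. A i k)"
  define nn where "nn \<equiv> (\<lambda>i. \<Sum>k \<in> {k. k < i \<and> A k i \<noteq> 0}. A k i)"
  let ?U = "upper_part A" and ?L = "lower_part A" and ?D = "diagm lam"
  have AUL: "A = madd ?U ?L" using assms(3)
    unfolding madd_def upper_part_def lower_part_def
    by (auto simp: fun_eq_iff)
  have mu: "diagm (mu_seq A lam) = madd ?D (diagm m)"
    unfolding mu_seq_def m_def by (rule diagm_add)
  have nu: "diagm (nu_seq A lam) = madd ?D (diagm nn)"
    unfolding nu_seq_def nn_def by (rule diagm_add)
  have bU: "band R ?U" and bL: "band R ?L" using bA by (auto intro: band_upper band_lower)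
  have bD: "band R (diagm f)" for f using R by (rule band_diagm)
  have e0: "dB n (madd A ?D) = SS n M (madd (madd ?U ?L) ?D) (madd (madd ?U ?L) ?D)"
  proof -
    have eq: "madd A ?D = madd (madd ?U ?L) ?D" by (simp only: AUL[symmetric])
    show ?thesis unfolding eq[symmetric] by (rule dB_SS[OF band_madd[OF bA bD] R M_def])
  qed
  have e1: "dB n (madd ?U (diagm (mu_seq A lam))) = SS n M (madd ?U (madd ?D (diagm m))) (madd ?U (madd ?D (diagm m)))"
    unfolding mu by (rule dB_SS[OF band_madd[OF bU band_madd[OF bD bD]] R M_def])
  have e2: "dB n (madd ?L (diagm (nu_seq A lam))) = SS n M (madd ?L (madd ?D (diagm nn))) (madd ?L (madd ?D (diagm nn)))"
    unfolding nu by (rule dB_SS[OF band_madd[OF bL band_madd[OF bD bD]] R M_def])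
  have k: "SS n M ?L ?U = SS n M (diagm m) ?U + SS n M ?L (diagm nn)"
    using key[OF bA R M_def] unfolding m_def nn_def .
  show ?thesis
    unfolding e0 e1 e2 by (simp add: SS_add1 SS_add2 SS_DD SS_UD SS_DL SS_UL k)
qed

end
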